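(* Let $X$ be a non-empty set and let $\mathcal{U}\subseteq P(X)$ be anti-closed under finite intersections. Then $\mathcal{U}$ is anti-closed under arbitrary intersections.
   Context: For a family $\mathcal{U}\subseteq P(X)$: $\mathcal{U}$ is anti-closed under finite intersections if for every $n\in\mathbb{N}$ and all $A_1,\dots,A_n\in\mathcal{U}$ that are not all equal, $\bigcap_{i=1}^n A_i\notin\mathcal{U}$; $\mathcal{U}$ is anti-closed under arbitrary intersections if for every non-empty index set $J$ and all $A_i\in\mathcal{U}$ ($i\in J$) not all equal, $\bigcap_{i\in J}A_i\notin\mathcal{U}$; $\mathcal{U}$ is anti-closed under arbitrary unions if for every non-empty index set $J$ and all $A_i\in\mathcal{U}$ ($i\in J$) not all equal, $\bigcup_{i\in J}A_i\notin\mathcal{U}$. *)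

theory Defs
  imports Main
begin

definition anti_closed_fin_inter :: "'a set set \<Rightarrow> bool" where
  "anti_closed_fin_inter U \<longleftrightarrow>
     (\<forall>(n::nat) (A::nat \<Rightarrow> 'a set).
        (\<forall>i\<in>{1..n}. A i \<in> U) \<and> \<not> (\<forall>i\<in>{1..n}. \<forall>j\<in>{1..n}. A i = A j)
        \<longrightarrow> (\<Inter>i\<in>{1..n}. A i) \<notin> U)"

definition anti_closed_arb_inter :: "'i itself \<Rightarrow> 'a set set \<Rightarrow> bool" where
  "anti_closed_arb_inter _ U \<longleftrightarrow>
     (\<forall>(J::'i set) (A::'i \<Rightarrow> 'a set).
        J \<noteq> {} \<and> (\<forall>i\<in>J. A i \<in> U) \<and> \<not> (\<forall>i\<in>J. \<forall>j\<in>J. A i = A j)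
        \<longrightarrow> (\<Inter>i\<in>J. A i) \<notin> U)"

end

theory Submission
  imports Defs
begin

theorem mainTheorem3:
  fixes X :: "'a set" and U :: "'a set set"
  assumes "X \<noteq> {}"
    and "U \<subseteq> Pow X"
    and "anti_closed_fin_inter U"
  shows "anti_closed_arb_inter TYPE('i) U"
  unfolding anti_closed_arb_inter_def
proof (intro allI impI)
  fix J :: "'i set" and A :: "'i \<Rightarrow> 'a set"
  assume h: "J \<noteq> {} \<and> (\<forall>i\<in>J. A i \<in> U) \<and> \<not> (\<forall>i\<in>J. \<forall>j\<in>J. A i = A j)"
  show "(\<Inter>i\<in>J. A i) \<notin> U"
  proof
    define B where "B = (\<Inter>i\<in>J. A i)"
    assume BU: "(\<Inter>i\<in>J. A i) \<in> U"
    have eq: "A k = B" if k: "k \<in> J" for k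
    proof (rule ccontr)
      assume ne: "A k \<noteq> B"
      define F where "F = (\<lambda>m::nat. if m = 1 then B else A k)"
      have s: "{1..2::nat} = {1,2}" by auto
      have "(\<forall>i\<in>{1..2}. F i \<in> U) \<and> \<not> (\<forall>i\<in>{1..2}. \<forall>j\<in>{1..2}. F i = F j)"
        using BU h k ne unfolding s F_def B_def by auto
      with assms(3) have "(\<Inter>i\<in>{1..2}. F i) \<notin> U"
        unfolding anti_closed_fin_inter_def by blast
      moreover have "(\<Inter>i\<in>{1..2}. F i) = B"
        unfolding s F_def B_def using k by auto
      ultimately show False using BU B_def by simp
    qed
    with h show False by auto
  qed
qed

end
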